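(* Let $N\ge 3$ and let $\mathbf{g}=\mathbf{1}_{[0,W-1]}\in\mathbb{R}^N$ be the rectangular window ($\mathbf{g}[n]=1$ for $0\le n\le W-1$ and $0$ for $W\le n\le N-1$). Suppose (1) $2\le W\le N-1$, and (2) $N$ is coprime to $W$ and to $W-1$. Then for every non-vanishing $\mathbf{x}\in\mathbb{C}^N$, the algebraic algorithm described in the context, applied to the STFT magnitude $|\mathbf{X}[m,k]|^2$ of $\mathbf{x}$ with this window and $L=1$, outputs $e^{i\phi}\mathbf{x}$ for some $\phi\in\mathbb{R}$.
   Context: A vector $\mathbf{x}$ is non-vanishing if $\mathbf{x}[n]\ne0$ for all $n$. Signals and windows are indexed by $\{0,\dots,N-1\}$ and extended $N$-periodically. The STFT of $\mathbf{x}\in\mathbb{C}^N$ with window $\mathbf{g}$ and step $L=1$ is $\mathbf{X}[m,k]=\sum_{n=0}^{N-1}\mathbf{x}[n]\mathbf{g}[m-n]e^{-2\pi i kn/N}$, $m,k=0,\dots,N-1$. Algebraic algorithm: given $\mathbf{Y}[m,k]=|\mathbf{X}[m,k]|^2$, (1) compute $\mathbf{Z}[m,\ell]=\sum_{k=0}^{N-1}\mathbf{Y}[m,k]e^{-2\pi i k\ell/N}$ and $\mathbf{z}_\ell=(\mathbf{Z}[m,\ell])_{m=0}^{N-1}$; (2) for $\ell=0,1$ compute $\mathbf{x}_\ell=\frac1N\mathbf{G}_\ell^{-1}\mathbf{z}_\ell$, where $\mathbf{G}_\ell$ is the $N\times N$ circulant matrix with first column $(\mathbf{g}[m]\overline{\mathbf{g}[(m-\ell)\bmod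 N]})_{m=0}^{N-1}$, and set $\hat{\mathbf{x}}[0]=\sqrt{\mathbf{x}_0[0]}$; (3) recursively for $n=0,\dots,N-2$ define $\hat{\mathbf{x}}[n+1]$ by $\overline{\hat{\mathbf{x}}[n+1]}=\mathbf{x}_1[n]/\hat{\mathbf{x}}[n]$; output $\hat{\mathbf{x}}$. *)

theory Defs
  imports Complex_Main
begin

text \<open>Vectors in C^N are functions nat => complex; only indices 0..N-1 matter,
  and indices are reduced mod N (N-periodic extension).\<close>

definition rect_window :: "nat \<Rightarrow> nat \<Rightarrow> nat \<Rightarrow> complex" where
  "rect_window N W n = (if n mod N < W then 1 else 0)"

definition stft :: "nat \<Rightarrow> (nat \<Rightarrow> complex) \<Rightarrow> (nat \<Rightarrow> complex) \<Rightarrow> nat \<Rightarrow> nat \<Rightarrow> complex" where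
  "stft N g x m k = (\<Sum>n<N. x n * g ((m + N - n) mod N) * cis (- 2 * pi * real k * real n / real N))"

definition stft_mag2 :: "nat \<Rightarrow> (nat \<Rightarrow> complex) \<Rightarrow> (nat \<Rightarrow> complex) \<Rightarrow> nat \<Rightarrow> nat \<Rightarrow> complex" where
  "stft_mag2 N g x m k = complex_of_real ((cmod (stft N g x m k))\<^sup>2)"

definition alg_Z :: "nat \<Rightarrow> (nat \<Rightarrow> nat \<Rightarrow> complex) \<Rightarrow> nat \<Rightarrow> nat \<Rightarrow> complex" where
  "alg_Z N Y m l = (\<Sum>k<N. Y m k * cis (- 2 * pi * real k * real l / real N))"

definition circ_col :: "nat \<Rightarrow> (nat \<Rightarrow> complex) \<Rightarrow> nat \<Rightarrow> nat \<Rightarrow> complex" where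
  "circ_col N g l m = g (m mod N) * cnj (g ((m + N - l mod N) mod N))"

definition circ_G :: "nat \<Rightarrow> (nat \<Rightarrow> complex) \<Rightarrow> nat \<Rightarrow> nat \<Rightarrow> nat \<Rightarrow> complex" where
  "circ_G N g l m j = circ_col N g l ((m + N - j) mod N)"

text \<open>Step (2): x_l = (1/N) G_l^{-1} z_l, i.e. the unique vector v (supported on 0..N-1)
  with G_l v = z_l / N.\<close>
definition alg_x :: "nat \<Rightarrow> (nat \<Rightarrow> complex) \<Rightarrow> (nat \<Rightarrow> nat \<Rightarrow> complex) \<Rightarrow> nat \<Rightarrow> nat \<Rightarrow> complex" where
  "alg_x N g Y l = (THE v. (\<forall>i\<ge>N. v i = 0) \<and>
      (\<forall>m<N. (\<Sum>j<N. circ_G N g l m j * v j) = alg_Z N Y m l / of_nat N))"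

primrec alg_out :: "nat \<Rightarrow> (nat \<Rightarrow> complex) \<Rightarrow> (nat \<Rightarrow> nat \<Rightarrow> complex) \<Rightarrow> nat \<Rightarrow> complex" where
  "alg_out N g Y 0 = csqrt (alg_x N g Y 0 0)"
| "alg_out N g Y (Suc n) = cnj (alg_x N g Y 1 n / alg_out N g Y n)"

end

theory Submission
  imports Defs
begin

lemma orth:
  fixes N :: nat and t :: int
  assumes N: "N > 0"
  shows "(\<Sum>k<N. cis (2 * pi * real k * of_int t / real N)) = (if int N dvd t then of_nat N else 0)"
proof -
  define z where "z = cis (2 * pi * of_int t / real N)"
  have zk: "cis (2 * pi * real k * of_int t / real N) = z ^ k" for k
    unfolding z_def DeMoivre by (simp add: field_simps)
  show ?thesis
  proof (cases "int N dvd t")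
    case True
    then obtain q where q: "t = int N * q" by blast
    have "cis (2 * pi * real k * of_int t / real N) = 1" for k
    proof -
      have "2 * pi * real k * of_int t / real N = 2 * pi * of_int (int k * q)"
        using N by (simp add: q field_simps)
      then show ?thesis by (metis cis_multiple_2pi Ints_of_int)
    qed
    then show ?thesis using True by simp
  next
    case False
    have z1: "z \<noteq> 1"
    proof
      assume "z = 1"
      then have "cos (2 * pi * of_int t / real N) = 1" unfolding z_def
        by (metis complex.sel(1) cis.sel(1) one_complex.sel(1))
      then obtain n :: int where n: "2 * pi * of_int t / real N = of_int n * 2 * pi"
        using cos_one_2pi_int by blast
      then have "of_int t = real N * of_int n" using N by (simp add: field_simps)
      then have "t = int N * n" by (metis of_int_eq_iff of_int_mult of_int_of_nat_eq)
      then show False using False by simp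
    qed
    have e: "real N * (2 * pi * of_int t / real N) = 2 * pi * of_int t" using N by simp
    have zN: "z ^ N = 1"
      unfolding z_def DeMoivre e by simp
    have "(\<Sum>k<N. z ^ k) = 0" using geometric_sum[OF z1, of N] zN by simp
    then show ?thesis using False zk by simp
  qed
qed

lemma dvd_iff_mod:
  fixes N n n' l :: nat
  assumes "n < N" "n' < N" "l < N"
  shows "int N dvd (int n' - int n - int l) \<longleftrightarrow> n' = (n + l) mod N"
proof -
  have "int N dvd (int n' - int n - int l) \<longleftrightarrow> int n' mod int N = (int n + int l) mod int N"
    by (simp add: diff_diff_eq mod_eq_dvd_iff)
  also have "\<dots> \<longleftrightarrow> n' mod N = (n + l) mod N"
    by (metis nat_int of_nat_add of_nat_mod)
  also have "\<dots> \<longleftrightarrow> n' = (n + l) mod N" using assms by simp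
  finally show ?thesis .
qed

lemma idx_eq:
  fixes N m j l :: nat
  assumes "m < N" "j < N" "l < N"
  shows "((m + N - j) mod N + N - l mod N) mod N = (m + N - (j + l) mod N) mod N"
proof -
  have a: "int ((m + N - j) mod N) = (int m - int j) mod int N"
  proof -
    have "int (m + N - j) = int m - int j + int N" using assms by simp
    then show ?thesis by (metis mod_add_self2 zmod_int)
  qed
  have "int (((m + N - j) mod N + N - l mod N) mod N) = (int ((m + N - j) mod N) + int N - int l) mod int N"
  proof -
    have "int ((m + N - j) mod N + N - l mod N) = int ((m + N - j) mod N) + int N - int l" using assms by simp
    then show ?thesis by (metis zmod_int)
  qed
  also have "\<dots> = (int m - int j - int l) mod int N" unfolding a
    by (metis add.commute mod_add_self1 mod_diff_left_eq)
  finally have L: "int (((m + N - j) mod N + N - l mod N) mod N) = (int m - int j - int l) mod int N" .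
  have "int ((m + N - (j + l) mod N) mod N) = (int m + int N - int ((j+l) mod N)) mod int N"
  proof -
    have "(j + l) mod N < N" using assms by simp
    then have "int (m + N - (j + l) mod N) = int m + int N - int ((j+l) mod N)" by simp
    then show ?thesis by (metis zmod_int)
  qed
  also have "\<dots> = (int m - int j - int l) mod int N"
    by (metis diff_add_eq diff_diff_eq mod_add_self2 mod_diff_right_eq of_nat_add zmod_int)
  finally show ?thesis using L by simp
qed

lemma alg_Z_eq:
  fixes N l m :: nat and g x :: "nat \<Rightarrow> complex"
  assumes N: "N > 0" and l: "l < N" and m: "m < N"
  shows "alg_Z N (stft_mag2 N g x) m l =
    of_nat N * (\<Sum>j<N. circ_G N g l m j * (x j * cnj (x ((j + l) mod N))))"
proof -
  define a where "a n = x n * g ((m + N - n) mod N)" for n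
  define e where "e k n = cis (- 2 * pi * real k * real n / real N)" for k n :: nat
  have X: "stft N g x m k = (\<Sum>n<N. a n * e k n)" for k
    unfolding stft_def a_def e_def by simp
  have inner: "e k n * cnj (e k n') * e k l = cis (2 * pi * real k * of_int (int n' - int n - int l) / real N)" for k n n'
    unfolding e_def cis_cnj cis_mult
    by (rule arg_cong[where f=cis]) (simp add: algebra_simps add_divide_distrib diff_divide_distrib)
  have "alg_Z N (stft_mag2 N g x) m l = (\<Sum>k<N. (\<Sum>n<N. a n * e k n) * cnj (\<Sum>n'<N. a n' * e k n') * e k l)"
    unfolding alg_Z_def stft_mag2_def X complex_norm_square e_def by simp
  also have "\<dots> = (\<Sum>k<N. \<Sum>n<N. \<Sum>n'<N. a n * cnj (a n') * (e k n * cnj (e k n') * e k l))"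
  proof (intro sum.cong refl)
    fix k
    show "(\<Sum>n<N. a n * e k n) * cnj (\<Sum>n'<N. a n' * e k n') * e k l =
      (\<Sum>n<N. \<Sum>n'<N. a n * cnj (a n') * (e k n * cnj (e k n') * e k l))"
      unfolding cnj_sum complex_cnj_mult sum_product sum_distrib_right
      by (intro sum.cong refl) (simp add: sum_distrib_left mult_ac)
  qed
  also have "\<dots> = (\<Sum>n<N. \<Sum>k<N. \<Sum>n'<N. a n * cnj (a n') * (e k n * cnj (e k n') * e k l))"
    by (rule sum.swap)
  also have "\<dots> = (\<Sum>n<N. \<Sum>n'<N. \<Sum>k<N. a n * cnj (a n') * (e k n * cnj (e k n') * e k l))"
    by (rule sum.cong[OF refl], rule sum.swap)
  also have "\<dots> = (\<Sum>n<N. \<Sum>n'<N. a n * cnj (a n') * (\<Sum>k<N. e k n * cnj (e k n') * e k l))"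
    by (simp only: sum_distrib_left)
  also have "\<dots> = (\<Sum>n<N. \<Sum>n'<N. a n * cnj (a n') * (if n' = (n + l) mod N then of_nat N else 0))"
  proof (intro sum.cong refl)
    fix n n' assume nn: "n \<in> {..<N}" "n' \<in> {..<N}"
    have "(\<Sum>k<N. e k n * cnj (e k n') * e k l) = (\<Sum>k<N. cis (2 * pi * real k * of_int (int n' - int n - int l) / real N))"
      by (simp only: inner)
    also have "\<dots> = (if int N dvd (int n' - int n - int l) then of_nat N else 0)"
      by (rule orth[OF N])
    also have "\<dots> = (if n' = (n + l) mod N then of_nat N else 0)"
      using dvd_iff_mod[of n N n' l] nn l by simp
    finally show "a n * cnj (a n') * (\<Sum>k<N. e k n * cnj (e k n') * e k l) =
        a n * cnj (a n') * (if n' = (n + l) mod N then of_nat N else 0)" by simp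
  qed
  also have "\<dots> = (\<Sum>n<N. a n * cnj (a ((n + l) mod N)) * of_nat N)"
    using N by (simp add: if_distrib sum.delta' cong: if_cong)
  also have "\<dots> = of_nat N * (\<Sum>j<N. circ_G N g l m j * (x j * cnj (x ((j + l) mod N))))"
    unfolding sum_distrib_left
  proof (intro sum.cong refl)
    fix j assume j: "j \<in> {..<N}"
    have "circ_G N g l m j = g ((m + N - j) mod N) * cnj (g ((m + N - (j + l) mod N) mod N))"
      unfolding circ_G_def circ_col_def using idx_eq[OF m _ l, of j] j by simp
    then show "a j * cnj (a ((j + l) mod N)) * of_nat N = of_nat N * (circ_G N g l m j * (x j * cnj (x ((j + l) mod N))))"
      unfolding a_def by (simp add: mult_ac)
  qed
  finally show ?thesis .
qed

lemma core:
  fixes u :: "int \<Rightarrow> complex" and N d :: nat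
  assumes N: "N > 0" and d: "d \<ge> 1" and cop: "coprime (int d) (int N)"
    and per: "\<And>a b. a mod int N = b mod int N \<Longrightarrow> u a = u b"
    and S: "\<And>a. (\<Sum>i<d. u (a - int i)) = 0"
  shows "u a = 0"
proof -
  obtain e where e: "d = Suc e" using d by (cases d) auto
  have step: "u b = u (b - int d)" for b
  proof -
    have "(\<Sum>i<d. u (b - int i)) = u b + (\<Sum>i<e. u (b - 1 - int i))"
      unfolding e sum.lessThan_Suc_shift by (simp add: algebra_simps)
    moreover have "(\<Sum>i<d. u (b - 1 - int i)) = (\<Sum>i<e. u (b - 1 - int i)) + u (b - int d)"
      unfolding e sum.lessThan_Suc by (simp add: algebra_simps)
    ultimately have "u b + (\<Sum>i<e. u (b - 1 - int i)) = 0"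
        "u (b - int d) + (\<Sum>i<e. u (b - 1 - int i)) = 0"
      using S[of b] S[of "b - 1"] by (simp_all add: add.commute)
    then show ?thesis by (simp add: eq_neg_iff_add_eq_0[symmetric])
  qed
  have up: "u (b + int k * int d) = u b" for b k
  proof (induction k arbitrary: b)
    case 0 then show ?case by simp
  next
    case (Suc k)
    have "u (b + int (Suc k) * int d) = u (b + int k * int d)"
      using step[of "b + int (Suc k) * int d"] by (simp add: algebra_simps)
    then show ?case using Suc by simp
  qed
  have down: "u (b - int k * int d) = u b" for b k
    using up[of "b - int k * int d" k] by simp
  have mult: "u (b + s * int d) = u b" for b s
  proof (cases "s \<ge> 0")
    case True then obtain k where "s = int k" using nonneg_int_cases by blast
    then show ?thesis using up by simp
  next
    case False then have "s \<le> 0" by simp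
    then obtain k where "s = - int k" using nonpos_int_cases by blast
    then show ?thesis using down[of b k] by simp
  qed
  obtain s t where st: "s * int d + t * int N = 1"
  proof -
    have "gcd (int d) (int N) = 1" using cop by simp
    then show ?thesis using bezout_int[of "int d" "int N"] that by auto
  qed
  have succ: "u (b + 1) = u b" for b
  proof -
    have "u (b + 1) = u (b + s * int d + t * int N)" using st by (simp add: algebra_simps)
    also have "\<dots> = u (b + s * int d)" by (rule per) simp
    also have "\<dots> = u b" by (rule mult)
    finally show ?thesis .
  qed
  have nat0: "u (int n) = u 0" for n
  proof (induction n)
    case 0 then show ?case by simp
  next
    case (Suc n)
    have "u (int (Suc n)) = u (int n + 1)" by (simp add: add.commute)
    also have "\<dots> = u (int n)" by (rule succ)
    finally show ?case using Suc by simp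
  qed
  have all: "u b = u 0" for b
  proof -
    have "b mod int N \<ge> 0" using N by simp
    then obtain n where n: "b mod int N = int n" using nonneg_int_cases by blast
    have "u b = u (int n)" by (rule per) (simp add: n[symmetric])
    then show ?thesis using nat0 by simp
  qed
  have "(\<Sum>i<d. u (0 - int i)) = (\<Sum>i<d. u 0)" by (rule sum.cong[OF refl], rule all)
  then have "(\<Sum>i<d. u (0 - int i)) = of_nat d * u 0" by simp
  then have "of_nat d * u 0 = 0" using S[of 0] by simp
  then show ?thesis using all d by simp
qed

lemma circ_rect:
  fixes N W l i :: nat
  assumes "W < N" "l \<le> 1" "i < N" "1 \<le> W"
  shows "circ_col N (rect_window N W) l i = (if l \<le> i \<and> i < W then 1 else 0)"
proof -
  have lN: "l mod N = l" using assms by simp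
  show ?thesis
  proof (cases "l = 0")
    case True then show ?thesis using assms unfolding circ_col_def rect_window_def by simp
  next
    case False
    then have l1: "l = 1" using assms by simp
    show ?thesis
    proof (cases "i = 0")
      case True
      have "i + N - l mod N = N - 1" using l1 lN True by simp
      then have "(i + N - l mod N) mod N mod N = N - 1" using assms by simp
      then show ?thesis using assms l1 True unfolding circ_col_def rect_window_def by simp
    next
      case False
      have "i + N - l mod N = (i - 1) + N" using l1 lN False by simp
      then have "(i + N - l mod N) mod N mod N = i - 1" using assms by simp
      then show ?thesis using assms l1 False unfolding circ_col_def rect_window_def by auto
    qed
  qed
qed
lemma modint: "j < (N::nat) \<Longrightarrow> int ((m + N - j) mod N) = (int m - int j) mod int N"
proof -
  assume "j < N"
  then have "int (m + N - j) = int m - int j + int N" by simp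
  then show ?thesis by (metis mod_add_self2 zmod_int)
qed
lemma A: "j < (N::nat) \<Longrightarrow> m < N \<Longrightarrow> (m + N - (m + N - j) mod N) mod N = j"
proof -
  assume a: "j < N" "m < N"
  have r: "(m + N - j) mod N < N" using a by simp
  have "int ((m + N - (m + N - j) mod N) mod N) = (int m - int ((m + N - j) mod N)) mod int N"
    using modint[OF r] by simp
  also have "\<dots> = (int m - (int m - int j)) mod int N" using modint[OF a(1)]
    by (metis mod_diff_right_eq)
  also have "\<dots> = int j" using a by simp
  finally show ?thesis by simp
qed
lemma B: "i < (N::nat) \<Longrightarrow> nat ((int m - int i) mod int N) = (m + N - i) mod N"
  using modint by (metis nat_int)

lemma reidx:
  fixes f :: "nat \<Rightarrow> nat \<Rightarrow> complex" and m N :: nat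
  assumes m: "m < N"
  shows "(\<Sum>j<N. f ((m + N - j) mod N) j) = (\<Sum>i<N. f i ((m + N - i) mod N))"
proof (rule sum.reindex_bij_witness[where i="\<lambda>i. (m + N - i) mod N" and j="\<lambda>j. (m + N - j) mod N"])
  fix a assume "a \<in> {..<N}" then show "(m + N - (m + N - a) mod N) mod N = a" using A m by simp
next
  fix a assume "a \<in> {..<N}" then show "(m + N - (m + N - a) mod N) mod N = a" using A m by simp
next
  fix a assume "a \<in> {..<N}" then show "(m + N - a) mod N \<in> {..<N}" using m by simp
next
  fix a assume "a \<in> {..<N}" then show "(m + N - a) mod N \<in> {..<N}" using m by simp
next
  fix a assume "a \<in> {..<N}"
  then show "f ((m + N - a) mod N) ((m + N - (m + N - a) mod N) mod N) = f ((m + N - a) mod N) a"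
    using A m by simp
qed

lemma uniq:
  fixes N W l :: nat and v :: "nat \<Rightarrow> complex"
  assumes WN: "W < N" and W2: "2 \<le> W" and l: "l \<le> 1" and cop: "coprime N (W - l)"
    and hom: "\<And>m. m < N \<Longrightarrow> (\<Sum>j<N. circ_G N (rect_window N W) l m j * v j) = 0"
  shows "v j = 0 \<or> j \<ge> N"
proof -
  have N: "N > 0" using WN by simp
  define u where "u a = v (nat (a mod int N))" for a
  have per: "u a = u b" if "a mod int N = b mod int N" for a b
    unfolding u_def using that by simp
  define c where "c i = (if l \<le> i \<and> i < W then 1 else (0::complex))" for i
  have key: "(\<Sum>i<W - l. u (int m - int l - int i)) = 0" if m: "m < N" for m
  proof -
    have "0 = (\<Sum>j<N. circ_G N (rect_window N W) l m j * v j)" using hom m by simp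
    also have "\<dots> = (\<Sum>j<N. c ((m + N - j) mod N) * v j)"
      unfolding circ_G_def c_def using circ_rect WN l W2 N by simp
    also have "\<dots> = (\<Sum>i<N. c i * v ((m + N - i) mod N))"
      by (rule reidx[OF m, of "\<lambda>a b. c a * v b"])
    also have "\<dots> = (\<Sum>i<N. c i * u (int m - int i))"
      unfolding u_def using B by simp
    also have "\<dots> = (\<Sum>i\<in>{l..<W}. u (int m - int i))"
    proof -
      have "(\<Sum>i<N. c i * u (int m - int i)) = (\<Sum>i\<in>{..<N} \<inter> {l..<W}. u (int m - int i))"
      proof -
        have "(\<Sum>i<N. c i * u (int m - int i)) = (\<Sum>i<N. if i \<in> {l..<W} then u (int m - int i) else 0)"
          by (rule sum.cong) (auto simp: c_def)
        also have "\<dots> = (\<Sum>i\<in>{..<N} \<inter> {l..<W}. u (int m - int i))"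
          by (rule sum.inter_restrict[symmetric]) simp
        finally show ?thesis .
      qed
      also have "{..<N} \<inter> {l..<W} = {l..<W}" using WN by auto
      finally show ?thesis .
    qed
    also have "\<dots> = (\<Sum>i<W - l. u (int m - int l - int i))"
    proof -
      have "{l..<W} = (\<lambda>i. i + l) ` {..<W - l}" using l W2
      proof (intro set_eqI iffI)
        fix x assume "x \<in> {l..<W}"
        then have "x - l \<in> {..<W - l}" "x = (x - l) + l" by auto
        then show "x \<in> (\<lambda>i. i + l) ` {..<W - l}" by blast
      qed auto
      then show ?thesis by (simp add: sum.reindex algebra_simps)
    qed
    finally show ?thesis by simp
  qed
  have S: "(\<Sum>i<W - l. u (a - int i)) = 0" for a
  proof -
    define m where "m = nat ((a + int l) mod int N)"
    have mN: "m < N" unfolding m_def using N by (simp add: nat_less_iff)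
    have im: "int m = (a + int l) mod int N" unfolding m_def using N by simp
    have "u (int m - int l - int i) = u (a - int i)" for i
      by (rule per) (simp add: im diff_diff_eq mod_diff_left_eq)
    then show ?thesis using key[OF mN] by simp
  qed
  have cop': "coprime (int (W - l)) (int N)" using cop by (simp add: coprime_commute)
  have "u a = 0" for a
    by (rule core[OF N _ cop' per S]) (use W2 l in simp)
  then have "j < N \<Longrightarrow> v j = 0" unfolding u_def by (metis nat_int of_nat_0_le_iff mod_less zmod_int)
  then show ?thesis by linarith
qed

theorem corollary2:
  fixes N W :: nat and x :: "nat \<Rightarrow> complex"
  assumes "N \<ge> 3"
    and "2 \<le> W" and "W \<le> N - 1"
    and "coprime N W" and "coprime N (W - 1)"
    and "\<forall>n<N. x n \<noteq> 0"
  shows "\<exists>\<phi>::real. \<forall>n<N.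
           alg_out N (rect_window N W) (stft_mag2 N (rect_window N W) x) n = cis \<phi> * x n"
proof -
  note N3 = assms(1) and W2 = assms(2) and WN1 = assms(3) and nz = assms(6)
  have N: "N > 0" and WN: "W < N" using N3 WN1 by auto
  define g where "g = rect_window N W"
  define Y where "Y = stft_mag2 N g x"
  define y where "y l j = (if j < N then x j * cnj (x ((j + l) mod N)) else 0)" for l j
  have AX: "alg_x N g Y l = y l" if l: "l \<le> 1" for l
  proof -
    have lN: "l < N" using l N3 by simp
    have cop: "coprime N (W - l)"
    proof (cases "l = 0")
      case True then show ?thesis using assms(4) by simp
    next
      case False then have "l = 1" using l by simp
      then show ?thesis using assms(5) by simp
    qed
    have sol: "(\<Sum>j<N. circ_G N g l m j * y l j) = alg_Z N Y m l / of_nat N" if m: "m < N" for m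
    proof -
      have "alg_Z N Y m l = of_nat N * (\<Sum>j<N. circ_G N g l m j * y l j)"
        unfolding Y_def alg_Z_eq[OF N lN m] by (simp add: y_def)
      then show ?thesis using N by simp
    qed
    show ?thesis unfolding alg_x_def
    proof (rule the_equality)
      show "(\<forall>i\<ge>N. y l i = 0) \<and> (\<forall>m<N. (\<Sum>j<N. circ_G N g l m j * y l j) = alg_Z N Y m l / of_nat N)"
        using sol by (simp add: y_def)
    next
      fix v assume v: "(\<forall>i\<ge>N. v i = 0) \<and> (\<forall>m<N. (\<Sum>j<N. circ_G N g l m j * v j) = alg_Z N Y m l / of_nat N)"
      define w where "w j = v j - y l j" for j
      have hom: "(\<Sum>j<N. circ_G N (rect_window N W) l m j * w j) = 0" if m: "m < N" for m
      proof -
        have "(\<Sum>j<N. circ_G N g l m j * w j) = (\<Sum>j<N. circ_G N g l m j * v j) - (\<Sum>j<N. circ_G N g l m j * y l j)"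
          unfolding w_def by (simp add: algebra_simps sum_subtractf)
        then show ?thesis using v sol[OF m] m unfolding g_def by simp
      qed
      show "v = y l"
      proof
        fix j
        show "v j = y l j"
        proof (cases "j < N")
          case True
          then have "w j = 0" using uniq[OF WN W2 l cop hom, of j] by linarith
          then show ?thesis unfolding w_def by simp
        next
          case False then show ?thesis using v by (simp add: y_def)
        qed
      qed
    qed
  qed
  define \<phi> where "\<phi> = - Arg (x 0)"
  have cc: "cnj (cis \<phi>) * cis \<phi> = 1" by (simp add: cis_cnj cis_mult)
  have main: "alg_out N g Y n = cis \<phi> * x n" if "n < N" for n
    using that
  proof (induction n)
    case 0
    have "alg_out N g Y 0 = csqrt (x 0 * cnj (x 0))" using AX[of 0] N by (simp add: y_def)
    also have "x 0 * cnj (x 0) = complex_of_real ((cmod (x 0))\<^sup>2)" by (rule complex_norm_square[symmetric])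
    also have "csqrt (complex_of_real ((cmod (x 0))\<^sup>2)) = complex_of_real (cmod (x 0))" by simp
    also have "\<dots> = cis \<phi> * x 0"
    proof -
      have "cis \<phi> * x 0 = cis \<phi> * rcis (cmod (x 0)) (Arg (x 0))" by (simp add: rcis_cmod_Arg)
      also have "\<dots> = complex_of_real (cmod (x 0))" unfolding rcis_def \<phi>_def
        by (simp add: cis_mult[symmetric] mult_ac) (metis cis_cnj cis_mult add.right_inverse cis_zero mult.commute)
      finally show ?thesis by simp
    qed
    finally show ?case .
  next
    case (Suc n)
    then have nN: "n < N" by simp
    have xn: "x n \<noteq> 0" using nz nN by simp
    have "alg_out N g Y (Suc n) = cnj (y 1 n / (cis \<phi> * x n))"
      using Suc AX[of 1] by simp
    also have "\<dots> = cnj (x n * cnj (x (Suc n)) / (cis \<phi> * x n))"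
      using Suc.prems by (simp add: y_def nN)
    also have "\<dots> = x (Suc n) / cnj (cis \<phi>)"
      using xn by simp
    also have "\<dots> = cis \<phi> * x (Suc n)"
      using cc by (simp add: field_simps cis_cnj)
    finally show ?case .
  qed
  show ?thesis using main unfolding g_def Y_def by blast
qed

end
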